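(* Let $\zeta_5=\exp(2\pi i/5)$, $K=\mathbb{Q}(\zeta_5)\subset\mathbb{C}$, $\mathcal{O}_K=\mathbb{Z}[\zeta_5]$, let $\sigma:K\to\mathbb{C}$ be the embedding with $\sigma(\zeta_5)=\zeta_5^2$, and let $\mathcal{S}=\{z\in\mathcal{O}_K : |\sigma(z)|\le 1\}$. Then for every $z\in\mathcal{S}$, $$\min_{z'\in\mathcal{S}\setminus\{z\}}|z-z'|\le 1.$$
   Context: Elements of $K$ are regarded as complex numbers via the inclusion $K\subset\mathbb{C}$. *)

theory Defs
  imports Complex_Main "HOL-Computational_Algebra.Polynomial"
begin

definition zeta5 :: complex where
  "zeta5 = exp (2 * of_real pi * \<i> / 5)"

definition OK5 :: "complex set" where
  "OK5 = {poly (map_poly of_int p) zeta5 | p :: int poly. True}"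

text \<open>The set S = {z in O_K : |sigma z| <= 1}, where sigma is the embedding with
  sigma(zeta5) = zeta5^2, so sigma(p(zeta5)) = p(zeta5^2) for every integer polynomial p.\<close>
definition S5 :: "complex set" where
  "S5 = {poly (map_poly of_int p) zeta5 | p :: int poly.
           cmod (poly (map_poly of_int p) (zeta5 ^ 2)) \<le> 1}"

end

theory Submission
  imports Defs
begin

lemma core:
  fixes r a :: real
  assumes "\<bar>a\<bar> \<le> pi/5" "0 \<le> r" "r \<le> 1"
  shows "cmod (1 - of_real r * cis a) \<le> 1"
proof -
  have "cos (pi/3) \<le> cos \<bar>a\<bar>"
    using assms(1) by (intro cos_monotone_0_pi_le) (auto simp: pi_gt_zero)
  hence c: "cos a \<ge> 1/2" by (simp add: cos_60)
  have "(cmod (1 - of_real r * cis a))^2 = (1 - r * cos a)^2 + (r * sin a)^2"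
    by (simp add: cmod_power2 )
  also have "\<dots> = 1 - 2*r*cos a + r^2 * ((sin a)^2 + (cos a)^2)"
    unfolding power2_eq_square by algebra
  also have "\<dots> = 1 - 2*r*cos a + r^2" by (simp only: sin_cos_squared_add)
  also have "\<dots> \<le> 1"
  proof -
    have "r * r \<le> r * 1" using assms by (intro mult_left_mono) auto
    moreover have "r * (1/2) \<le> r * cos a" using c assms by (intro mult_left_mono) auto
    ultimately show ?thesis by (simp add: power2_eq_square)
  qed
  finally show ?thesis by (simp add: power_le_one_iff abs_le_square_iff)
qed

lemma zeta_pow: "zeta5 ^ m = cis (2*pi*real m/5)"
proof -
  have "zeta5 = cis (2*pi/5)" unfolding zeta5_def cis_conv_exp
    by (simp add: mult.commute)
  hence "zeta5 ^ m = cis (2*pi/5) ^ m" by simp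
  also have "\<dots> = cis (real m * (2*pi/5))" by (rule DeMoivre)
  finally have "zeta5 ^ m = cis (real m * (2*pi/5))" .
  thus ?thesis by (simp add: field_simps)
qed

lemma exists_root:
  assumes "cmod w \<le> 1"
  shows "\<exists>m::nat. cmod (w + zeta5 ^ m) \<le> 1"
proof -
  define t where "t = Arg (-w)"
  define t0 where "t0 = (if t < 0 then t + 2*pi else t)"
  have t0: "0 \<le> t0" "cis t0 = cis t"
    using Arg_bounded[of "-w"] unfolding t0_def t_def by (auto simp: complex_eq_iff)
  define k where "k = round (t0*5/(2*pi))"
  have k0: "k \<ge> 0" unfolding k_def using t0(1) by (simp add: round_def)
  define m where "m = nat k"
  have km: "real m = of_int k" using k0 unfolding m_def by simp
  have "\<bar>of_int k - t0*5/(2*pi)\<bar> \<le> 1/2" unfolding k_def by (rule of_int_round_abs_le)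
  hence "\<bar>t0 - 2*pi*real m/5\<bar> \<le> pi/5"
    unfolding km by (simp add: abs_le_iff field_simps)
  hence b: "\<bar>t0 - 2*pi*real m/5\<bar> \<le> pi/5" .
  define r where "r = cmod w"
  have w: "w = - (of_real r * cis t0)"
    using rcis_cmod_Arg[of "-w"] t0(2) unfolding r_def t_def rcis_def by simp
  have "w + zeta5 ^ m = cis (2*pi*real m/5) * (1 - of_real r * cis (t0 - 2*pi*real m/5))"
    unfolding w zeta_pow by (simp add: cis_divide[symmetric] algebra_simps flip: cis_mult)
  hence "cmod (w + zeta5 ^ m) = cmod (1 - of_real r * cis (t0 - 2*pi*real m/5))"
    by (simp add: norm_mult)
  also have "\<dots> \<le> 1" using core[OF b] assms unfolding r_def by simp
  finally show ?thesis by blast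
qed

lemma map_add: "map_poly (of_int::int\<Rightarrow>complex) (p+q) = map_poly of_int p + map_poly of_int q"
  by (rule poly_eqI) (simp add: coeff_map_poly)

lemma zeta5_5: "zeta5 ^ 5 = 1"
  by (simp add: zeta_pow)

theorem mainTheorem4:
  assumes "z \<in> S5"
  shows "\<exists>z' \<in> S5 - {z}. cmod (z - z') \<le> 1"
proof -
  obtain p :: "int poly" where z: "z = poly (map_poly of_int p) zeta5"
    and s: "cmod (poly (map_poly of_int p) (zeta5 ^ 2)) \<le> 1"
    using assms unfolding S5_def by blast
  obtain m where m: "cmod (poly (map_poly of_int p) (zeta5 ^ 2) + zeta5 ^ m) \<le> 1"
    using exists_root[OF s] by blast
  define q where "q = p + monom 1 (3*m)"
  have ev: "poly (map_poly of_int q) x = poly (map_poly of_int p) x + x ^ (3*m)" for x :: complex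
    unfolding q_def by (simp add: map_add map_poly_monom poly_monom)
  have "(zeta5^2)^(3*m) = zeta5 ^ m"
  proof -
    have "(zeta5^2)^(3*m) = (zeta5^5)^m * zeta5^m"
      by (simp flip: power_mult power_add)
    thus ?thesis by (simp add: zeta5_5)
  qed
  hence inS: "poly (map_poly of_int q) zeta5 \<in> S5"
    unfolding S5_def using m ev[of "zeta5^2"] by auto
  have n1: "cmod (zeta5 ^ (3*m)) = 1" by (simp add: zeta_pow)
  have nz: "zeta5 ^ (3*m) \<noteq> 0" using n1 by (metis norm_zero zero_neq_one)
  have "poly (map_poly of_int q) zeta5 \<noteq> z" using ev[of zeta5] z nz by (metis add_cancel_left_right)
  moreover have "cmod (z - poly (map_poly of_int q) zeta5) \<le> 1" using ev[of zeta5] z n1 by simp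
  ultimately show ?thesis using inS by blast
qed

end
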